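(* Let $G=(V,E)$ be a finite simple graph on $n$ vertices with adjacency matrix $A$ having eigenvalues $\lambda_1\ge\cdots\ge\lambda_n$, let $k\ge1$, and let $p\in\mathbb{R}_k[x]$ be such that $p(\lambda_1)>p(\lambda_i)$ for all $i\in\{2,\dots,n\}$. Let $W(p):=\max_{u\in V}(p(A))_{uu}$ and $\lambda(p):=\min_{2\le i\le n}p(\lambda_i)$. Then $$\chi_{kq}(G)\ \ge\ \frac{p(\lambda_1)-\lambda(p)}{W(p)-\lambda(p)}.$$
   Context: $\mathbb{R}_k[x]$ denotes the real polynomials of degree at most $k$. $\mathrm{dist}$ is the graph distance in $G$, $[c]=\{1,\dots,c\}$. A quantum $k$-distance $c$-coloring of $G$ is a collection of orthogonal projectors $\{P_{v,h} : v\in V, h\in[c]\}$ in $\mathbb{C}^{d\times d}$ (some $d\ge1$) with $\sum_{h}P_{v,h}=I_d$ for each $v$ and $P_{v,h}P_{w,h}=0$ for all distinct $v,w$ with $\mathrm{dist}(v,w)\le k$ and all $h$. $\chi_{kq}(G)$ is the smallest $c$ admitting such a coloring for some $d>0$; equivalently the quantum chromatic number of the $k$-th power graph $G^k$. *)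

theory Defs
  imports "Jordan_Normal_Form.Schur_Decomposition" "HOL-Computational_Algebra.Polynomial"
begin

definition simple_graph :: "nat \<Rightarrow> (nat \<Rightarrow> nat \<Rightarrow> bool) \<Rightarrow> bool" where
  "simple_graph n E \<longleftrightarrow> (\<forall>u v. E u v \<longrightarrow> u < n \<and> v < n) \<and>
     (\<forall>u v. E u v \<longrightarrow> E v u) \<and> (\<forall>u. \<not> E u u)"

definition adj_mat :: "nat \<Rightarrow> (nat \<Rightarrow> nat \<Rightarrow> bool) \<Rightarrow> real mat" where
  "adj_mat n E = mat n n (\<lambda>(i,j). if E i j then 1 else 0)"

definition dist_le :: "(nat \<Rightarrow> nat \<Rightarrow> bool) \<Rightarrow> nat \<Rightarrow> nat \<Rightarrow> nat \<Rightarrow> bool" where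
  "dist_le E k v w \<longleftrightarrow> (\<exists>l\<le>k. (v, w) \<in> {(x,y). E x y} ^^ l)"

definition mat_poly :: "'a::comm_ring_1 poly \<Rightarrow> 'a mat \<Rightarrow> 'a mat" where
  "mat_poly p A = foldr (\<lambda>c M. c \<cdot>\<^sub>m 1\<^sub>m (dim_row A) + A * M) (coeffs p) (0\<^sub>m (dim_row A) (dim_row A))"

definition mat_sum :: "nat \<Rightarrow> (nat \<Rightarrow> 'a::comm_ring_1 mat) \<Rightarrow> nat \<Rightarrow> 'a mat" where
  "mat_sum d f c = foldr (\<lambda>h M. f h + M) [1..<c+1] (0\<^sub>m d d)"

definition orth_projector :: "nat \<Rightarrow> complex mat \<Rightarrow> bool" where
  "orth_projector d P \<longleftrightarrow> P \<in> carrier_mat d d \<and> P * P = P \<and> mat_adjoint P = P"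

definition quantum_k_coloring ::
  "nat \<Rightarrow> (nat \<Rightarrow> nat \<Rightarrow> bool) \<Rightarrow> nat \<Rightarrow> nat \<Rightarrow> nat \<Rightarrow> (nat \<Rightarrow> nat \<Rightarrow> complex mat) \<Rightarrow> bool" where
  "quantum_k_coloring n E k c d P \<longleftrightarrow>
     (\<forall>v<n. \<forall>h\<in>{1..c}. orth_projector d (P v h)) \<and>
     (\<forall>v<n. mat_sum d (P v) c = 1\<^sub>m d) \<and>
     (\<forall>v<n. \<forall>w<n. v \<noteq> w \<longrightarrow> dist_le E k v w \<longrightarrow>
        (\<forall>h\<in>{1..c}. P v h * P w h = 0\<^sub>m d d))"

definition chi_kq :: "nat \<Rightarrow> (nat \<Rightarrow> nat \<Rightarrow> bool) \<Rightarrow> nat \<Rightarrow> nat" where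
  "chi_kq n E k = (LEAST c. \<exists>d>0. \<exists>P. quantum_k_coloring n E k c d P)"

end

theory Submission
  imports Defs
begin

lemma mat_poly_0[simp]: "mat_poly 0 A = 0\<^sub>m (dim_row A) (dim_row A)"
  by (simp add: mat_poly_def)

lemma mat_poly_dims_aux: "dim_row (foldr (\<lambda>c M. c \<cdot>\<^sub>m 1\<^sub>m (dim_row A) + A * M) cs (0\<^sub>m (dim_row A) (dim_row A))) = dim_row A
  \<and> dim_col (foldr (\<lambda>c M. c \<cdot>\<^sub>m 1\<^sub>m (dim_row A) + A * M) cs (0\<^sub>m (dim_row A) (dim_row A))) = dim_row A"
  by (induct cs) auto

lemma mat_poly_dims[simp]: "dim_row (mat_poly p A) = dim_row A" "dim_col (mat_poly p A) = dim_row A"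
  using mat_poly_dims_aux unfolding mat_poly_def by blast+

lemma one_smult_one_mat[simp]: "(1::'a::comm_ring_1) \<cdot>\<^sub>m 1\<^sub>m n = 1\<^sub>m n"
  by (rule eq_matI) auto

lemma zero_smult_one_mat[simp]: "(0::'a::comm_ring_1) \<cdot>\<^sub>m 1\<^sub>m n = 0\<^sub>m n n"
  by (rule eq_matI) auto

lemma mat_poly_pCons:
  assumes A: "A \<in> carrier_mat n n"
  shows "mat_poly (pCons a p) A = a \<cdot>\<^sub>m 1\<^sub>m n + A * mat_poly p A"
proof (cases "pCons a p = 0")
  case True
  then have "a = 0" "p = 0" by auto
  then show ?thesis using A by auto
next
  case False
  then have "coeffs (pCons a p) = a # coeffs p"
    by (cases "p = 0") (auto simp: cCons_def)
  then show ?thesis using A by (simp add: mat_poly_def)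
qed

lemma mat_poly_carrier[simp]:
  assumes A: "A \<in> carrier_mat n n"
  shows "mat_poly p A \<in> carrier_mat n n"
  using A by (induct p) (auto simp: mat_poly_pCons[OF A])

lemma add4_mat: fixes X :: "'a::comm_ring_1 mat"
  shows "X \<in> carrier_mat n m \<Longrightarrow> Y \<in> carrier_mat n m \<Longrightarrow> Z \<in> carrier_mat n m \<Longrightarrow> V \<in> carrier_mat n m
  \<Longrightarrow> (X + Z) + (Y + V) = (X + Y) + (Z + V)"
  by (rule eq_matI) (auto simp: add_ac)

lemma mat_poly_add:
  assumes A: "A \<in> carrier_mat n n"
  shows "mat_poly (p + q) A = mat_poly p A + mat_poly q A"
proof (induct p arbitrary: q)
  case 0
  then show ?case using A by simp
next
  case (pCons a p)
  note IH = pCons.hyps(2)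
  show ?case
  proof (cases q)
    case (pCons b q')
    note qq = this
    have c1: "mat_poly p A \<in> carrier_mat n n" "mat_poly q' A \<in> carrier_mat n n" using A by auto
    have "mat_poly (pCons a p + q) A = (a + b) \<cdot>\<^sub>m 1\<^sub>m n + A * (mat_poly p A + mat_poly q' A)"
      using IH mat_poly_pCons[OF A] by (simp add: qq)
    also have "\<dots> = (a \<cdot>\<^sub>m 1\<^sub>m n + b \<cdot>\<^sub>m 1\<^sub>m n) + (A * mat_poly p A + A * mat_poly q' A)"
      using mult_add_distrib_mat[OF A c1] add_smult_distrib_right_mat[of "1\<^sub>m n" n n a b] by simp
    also have "\<dots> = (a \<cdot>\<^sub>m 1\<^sub>m n + A * mat_poly p A) + (b \<cdot>\<^sub>m 1\<^sub>m n + A * mat_poly q' A)"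
      by (rule add4_mat) (use A c1 in auto)
    finally show ?thesis using qq mat_poly_pCons[OF A] by simp
  qed
qed

lemma mat_poly_smult:
  assumes A: "A \<in> carrier_mat n n"
  shows "mat_poly (smult c p) A = c \<cdot>\<^sub>m mat_poly p A"
proof (induct p)
  case 0
  then show ?case using A by (auto intro!: eq_matI)
next
  case (pCons a p)
  have c1: "mat_poly p A \<in> carrier_mat n n" using A by auto
  have "mat_poly (smult c (pCons a p)) A = (c * a) \<cdot>\<^sub>m 1\<^sub>m n + c \<cdot>\<^sub>m (A * mat_poly p A)"
    using pCons.hyps(2) mat_poly_pCons[OF A] mult_smult_distrib[OF A c1] by simp
  also have "\<dots> = c \<cdot>\<^sub>m (a \<cdot>\<^sub>m 1\<^sub>m n + A * mat_poly p A)"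
    using A c1 by (auto intro!: eq_matI simp: algebra_simps)
  finally show ?case using mat_poly_pCons[OF A] by simp
qed

lemma mat_poly_pCons0:
  assumes A: "A \<in> carrier_mat n n"
  shows "mat_poly (pCons 0 p) A = A * mat_poly p A"
  using mat_poly_pCons[OF A, of 0 p] A by (auto intro!: eq_matI)

lemma mat_poly_mult:
  assumes A: "A \<in> carrier_mat n n"
  shows "mat_poly (p * q) A = mat_poly p A * mat_poly q A"
proof (induct p)
  case 0
  then show ?case using A by (auto intro!: eq_matI)
next
  case (pCons a p)
  have c1: "mat_poly p A \<in> carrier_mat n n" "mat_poly q A \<in> carrier_mat n n" using A by auto
  have "mat_poly (pCons a p * q) A = a \<cdot>\<^sub>m mat_poly q A + A * (mat_poly p A * mat_poly q A)"
    by (simp add: mat_poly_add[OF A] mat_poly_smult[OF A] mat_poly_pCons0[OF A] pCons.hyps(2))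
  also have "\<dots> = (a \<cdot>\<^sub>m 1\<^sub>m n + A * mat_poly p A) * mat_poly q A"
  proof -
    have "(a \<cdot>\<^sub>m 1\<^sub>m n + A * mat_poly p A) * mat_poly q A = (a \<cdot>\<^sub>m 1\<^sub>m n) * mat_poly q A + (A * mat_poly p A) * mat_poly q A"
      by (rule add_mult_distrib_mat[of _ n n]) (use A c1 in auto)
    also have "(a \<cdot>\<^sub>m 1\<^sub>m n) * mat_poly q A = a \<cdot>\<^sub>m mat_poly q A"
      using mult_smult_assoc_mat[of "1\<^sub>m n" n n "mat_poly q A" n a] c1 left_mult_one_mat[OF c1(2)] by simp
    also have "(A * mat_poly p A) * mat_poly q A = A * (mat_poly p A * mat_poly q A)"
      using assoc_mult_mat[OF A c1] .
    finally show ?thesis by simp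
  qed
  finally show ?case using mat_poly_pCons[OF A] by simp
qed

lemma mat_poly_const:
  assumes A: "A \<in> carrier_mat n n"
  shows "mat_poly [:c:] A = c \<cdot>\<^sub>m 1\<^sub>m n"
  using mat_poly_pCons[OF A, of c 0] A by (auto intro!: eq_matI)

lemma mat_poly_comm:
  assumes A: "A \<in> carrier_mat n n"
  shows "A * mat_poly p A = mat_poly p A * A"
proof -
  have "A * mat_poly p A = mat_poly ([:0,1:] * p) A"
    using mat_poly_mult[OF A, of "[:0,1:]" p] mat_poly_pCons0[OF A, of "[:1:]"] mat_poly_const[OF A, of 1] A
    by simp
  also have "\<dots> = mat_poly (p * [:0,1:]) A" by (simp add: mult.commute)
  also have "\<dots> = mat_poly p A * A"
    using mat_poly_mult[OF A, of p "[:0,1:]"] mat_poly_pCons0[OF A, of "[:1:]"] mat_poly_const[OF A, of 1] A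
    by simp
  finally show ?thesis .
qed

lemma transpose_smult_mat: "transpose_mat (a \<cdot>\<^sub>m X) = a \<cdot>\<^sub>m transpose_mat X"
  by (rule eq_matI) auto

lemma mat_poly_transpose:
  assumes A: "A \<in> carrier_mat n n"
  shows "transpose_mat (mat_poly p A) = mat_poly p (transpose_mat A)"
proof (induct p)
  case 0
  then show ?case using A by (auto intro!: eq_matI)
next
  case (pCons a p)
  have At: "transpose_mat A \<in> carrier_mat n n" using A by auto
  have c1: "mat_poly p A \<in> carrier_mat n n" using A by auto
  have "transpose_mat (mat_poly (pCons a p) A) = a \<cdot>\<^sub>m 1\<^sub>m n + transpose_mat (mat_poly p A) * transpose_mat A"
    using mat_poly_pCons[OF A] transpose_add[of "a \<cdot>\<^sub>m 1\<^sub>m n" n n "A * mat_poly p A"] A c1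
      transpose_mult[OF A c1] by (simp add: transpose_smult_mat)
  also have "\<dots> = a \<cdot>\<^sub>m 1\<^sub>m n + mat_poly p (transpose_mat A) * transpose_mat A"
    using pCons.hyps(2) by simp
  also have "\<dots> = mat_poly (pCons a p) (transpose_mat A)"
    using mat_poly_pCons[OF At] mat_poly_comm[OF At] by simp
  finally show ?case .
qed

lemma mult_entry:
  assumes "X \<in> carrier_mat n m" "Y \<in> carrier_mat m k" "i < n" "j < k"
  shows "(X * Y) $$ (i, j) = (\<Sum>l<m. X $$ (i, l) * Y $$ (l, j))"
  using assms by (auto simp: scalar_prod_def atLeast0LessThan intro!: sum.cong)

lemma mat_poly_pCons_entry:
  assumes A: "A \<in> carrier_mat n n" and "i < n" "j < n"
  shows "mat_poly (pCons a p) A $$ (i, j) = (if i = j then a else 0) + (\<Sum>l<n. A $$ (i, l) * mat_poly p A $$ (l, j))"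
  using assms mat_poly_pCons[OF A] mult_entry[OF A mat_poly_carrier[OF A], of i j] by simp

lemma mult_carrier_sq: "A \<in> carrier_mat n n \<Longrightarrow> B \<in> carrier_mat n n \<Longrightarrow> A * B \<in> carrier_mat n n"
  by auto

lemma assoc_sq: "A \<in> carrier_mat n n \<Longrightarrow> B \<in> carrier_mat n n \<Longrightarrow> C \<in> carrier_mat n n \<Longrightarrow> A * B * C = A * (B * C)"
  by (rule assoc_mult_mat) auto

lemma mat_poly_similar:
  assumes P: "P \<in> carrier_mat n n" and Q: "Q \<in> carrier_mat n n" and T: "T \<in> carrier_mat n n"
    and PQ: "P * Q = 1\<^sub>m n" and QP: "Q * P = 1\<^sub>m n"
  shows "mat_poly f (P * T * Q) = P * mat_poly f T * Q"
proof (induct f)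
  case 0
  have "P * 0\<^sub>m n n * Q = 0\<^sub>m n n" using P Q by simp
  then show ?case using P T by simp
next
  case (pCons a f)
  have PTQ: "P * T * Q \<in> carrier_mat n n" using P T Q by auto
  have F: "mat_poly f T \<in> carrier_mat n n" using T by auto
  have "mat_poly (pCons a f) (P * T * Q) = a \<cdot>\<^sub>m 1\<^sub>m n + (P * T * Q) * (P * mat_poly f T * Q)"
    using mat_poly_pCons[OF PTQ] pCons.hyps(2) by simp
  also have "(P * T * Q) * (P * mat_poly f T * Q) = P * (T * mat_poly f T) * Q"
  proof -
    have "(P * T * Q) * (P * mat_poly f T * Q) = P * T * (Q * P) * mat_poly f T * Q"
      using P T Q F by (simp add: assoc_sq mult_carrier_sq)
    also have "\<dots> = P * (T * mat_poly f T) * Q" using QP P T Q F by (simp add: assoc_sq mult_carrier_sq)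
    finally show ?thesis .
  qed
  also have "a \<cdot>\<^sub>m 1\<^sub>m n = P * (a \<cdot>\<^sub>m 1\<^sub>m n) * Q"
    using P Q PQ mult_smult_distrib[of P n n "1\<^sub>m n" n a] mult_smult_assoc_mat[of P n n Q n a] by simp
  also have "P * (a \<cdot>\<^sub>m 1\<^sub>m n) * Q + P * (T * mat_poly f T) * Q = P * (a \<cdot>\<^sub>m 1\<^sub>m n + T * mat_poly f T) * Q"
  proof -
    have X: "a \<cdot>\<^sub>m 1\<^sub>m n \<in> carrier_mat n n" "T * mat_poly f T \<in> carrier_mat n n" using T F by auto
    have "P * (a \<cdot>\<^sub>m 1\<^sub>m n + T * mat_poly f T) = P * (a \<cdot>\<^sub>m 1\<^sub>m n) + P * (T * mat_poly f T)"
      using mult_add_distrib_mat[OF P X] .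
    moreover have "(P * (a \<cdot>\<^sub>m 1\<^sub>m n) + P * (T * mat_poly f T)) * Q = P * (a \<cdot>\<^sub>m 1\<^sub>m n) * Q + P * (T * mat_poly f T) * Q"
      by (rule add_mult_distrib_mat[of _ n n _ Q n]) (use P Q X in \<open>auto simp: mult_carrier_sq\<close>)
    ultimately show ?thesis by simp
  qed
  finally show ?case using mat_poly_pCons[OF T] by simp
qed

lemma sum_single:
  assumes "finite S" "i \<in> S" "\<And>l. l \<in> S \<Longrightarrow> l \<noteq> i \<Longrightarrow> f l = 0"
  shows "sum f S = f i"
proof -
  have "sum f S = f i + sum f (S - {i})" using assms sum.remove by metis
  also have "sum f (S - {i}) = 0" using assms by (intro sum.neutral) auto
  finally show ?thesis by simp
qed

lemma ut_poly:
  assumes T: "T \<in> carrier_mat n n" and ut: "upper_triangular T"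
  shows "(\<forall>i<n. \<forall>j<n. j < i \<longrightarrow> mat_poly f T $$ (i, j) = 0) \<and>
         (\<forall>i<n. mat_poly f T $$ (i, i) = poly f (T $$ (i, i)))"
proof (induct f)
  case 0
  then show ?case using T by auto
next
  case (pCons a f)
  note IH = pCons.hyps(2)
  have Tz: "\<And>i l. i < n \<Longrightarrow> l < i \<Longrightarrow> T $$ (i, l) = 0" using ut T by (auto simp: upper_triangular_def)
  have 1: "mat_poly (pCons a f) T $$ (i, j) = 0" if "i < n" "j < n" "j < i" for i j
  proof -
    have "(\<Sum>l<n. T $$ (i, l) * mat_poly f T $$ (l, j)) = 0"
    proof (rule sum.neutral, intro ballI)
      fix l assume "l \<in> {..<n}"
      then show "T $$ (i, l) * mat_poly f T $$ (l, j) = 0"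
        using Tz[of i l] IH that by (cases "l < i") auto
    qed
    then show ?thesis using mat_poly_pCons_entry[OF T that(1,2)] that by simp
  qed
  have 2: "mat_poly (pCons a f) T $$ (i, i) = poly (pCons a f) (T $$ (i, i))" if "i < n" for i
  proof -
    have "(\<Sum>l<n. T $$ (i, l) * mat_poly f T $$ (l, i)) = T $$ (i, i) * mat_poly f T $$ (i, i)"
    proof (rule sum_single)
      fix l assume "l \<in> {..<n}" "l \<noteq> i"
      then show "T $$ (i, l) * mat_poly f T $$ (l, i) = 0"
        using Tz[of i l] IH that by (cases "l < i") auto
    qed (use that in auto)
    then show ?thesis using mat_poly_pCons_entry[OF T that(1) that(1)] that IH by simp
  qed
  show ?case using 1 2 by blast
qed

lemma zb_mult:
  assumes N: "N \<in> carrier_mat n n" and M: "M \<in> carrier_mat n n"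
    and Nz: "\<And>i l. i < n \<Longrightarrow> l < n \<Longrightarrow> l < i + 1 \<Longrightarrow> N $$ (i, l) = 0"
    and Mz: "\<And>l j. l < n \<Longrightarrow> j < n \<Longrightarrow> j < l + k \<Longrightarrow> M $$ (l, j) = 0"
    and ij: "i < n" "j < n" "j < i + k + 1"
  shows "(N * M) $$ (i, j) = 0"
proof -
  have "(\<Sum>l<n. N $$ (i, l) * M $$ (l, j)) = 0"
  proof (rule sum.neutral, intro ballI)
    fix l assume "l \<in> {..<n}"
    then show "N $$ (i, l) * M $$ (l, j) = 0"
      using Nz[of i l] Mz[of l j] ij by (cases "l < i + 1") auto
  qed
  then show ?thesis using mult_entry[OF N M ij(1,2)] by simp
qed

lemma nilp_poly:
  assumes T: "T \<in> carrier_mat n n" and ut: "upper_triangular T"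
    and rz: "\<And>i. i < n \<Longrightarrow> poly r (T $$ (i, i)) = 0"
  shows "\<forall>i<n. \<forall>j<n. j < i + m \<longrightarrow> mat_poly (r ^ m) T $$ (i, j) = 0"
proof (induct m)
  case 0
  have "mat_poly (r ^ 0) T = 1\<^sub>m n" using mat_poly_const[OF T, of 1] by (simp add: one_pCons)
  then show ?case by simp
next
  case (Suc m)
  have Nz: "\<And>i l. i < n \<Longrightarrow> l < n \<Longrightarrow> l < i + 1 \<Longrightarrow> mat_poly r T $$ (i, l) = 0"
  proof -
    fix i l assume "i < n" "l < n" "l < i + 1"
    then show "mat_poly r T $$ (i, l) = 0" using ut_poly[OF T ut, of r] rz
      by (cases "l = i") auto
  qed
  show ?case
  proof (intro allI impI)
    fix i j assume "i < n" "j < n" "j < i + Suc m"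
    then have "(mat_poly r T * mat_poly (r ^ m) T) $$ (i, j) = 0"
      using zb_mult[OF mat_poly_carrier[OF T] mat_poly_carrier[OF T] Nz, where k=m] Suc by auto
    then show "mat_poly (r ^ Suc m) T $$ (i, j) = 0" by (simp add: mat_poly_mult[OF T])
  qed
qed

lemma sym_sq_zero:
  fixes S :: "real mat"
  assumes S: "S \<in> carrier_mat n n" and sym: "transpose_mat S = S" and sq: "S * S = 0\<^sub>m n n"
  shows "S = 0\<^sub>m n n"
proof (rule eq_matI)
  fix l i assume li: "l < dim_row (0\<^sub>m n n :: real mat)" "i < dim_col (0\<^sub>m n n :: real mat)"
  have symm: "\<And>a b. a < n \<Longrightarrow> b < n \<Longrightarrow> S $$ (a, b) = S $$ (b, a)"
    using sym S by (metis carrier_matD index_transpose_mat(1))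
  have "(\<Sum>k<n. S $$ (i, k) * S $$ (k, i)) = 0"
    using mult_entry[OF S S, of i i] sq li by simp
  then have "(\<Sum>k<n. (S $$ (k, i))^2) = 0"
    using symm li by (simp add: power2_eq_square)
  then have "\<forall>k\<in>{..<n}. (S $$ (k, i))^2 = 0"
    by (subst sum_nonneg_eq_0_iff[symmetric]) auto
  then show "S $$ (l, i) = 0\<^sub>m n n $$ (l, i)" using li by auto
qed (use S in auto)

lemma descent:
  fixes A :: "real mat"
  assumes A: "A \<in> carrier_mat n n" and sym: "transpose_mat A = A"
  shows "mat_poly (r ^ m) A = 0\<^sub>m n n \<Longrightarrow> mat_poly r A = 0\<^sub>m n n"
proof (induct m rule: less_induct)
  case (less m)
  show ?case
  proof (cases "m \<le> 1")
    case True
    show ?thesis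
    proof (cases "m = 1")
      case True then show ?thesis using less by simp
    next
      case False
      then have "m = 0" using \<open>m \<le> 1\<close> by simp
      then have "1\<^sub>m n = (0\<^sub>m n n :: real mat)" using less mat_poly_const[OF A, of 1] by (simp add: one_pCons)
      then have "n = 0" by (metis index_one_mat(1) index_zero_mat(1) zero_neq_one neq0_conv)
      then show ?thesis using A by (auto intro!: eq_matI)
    qed
  next
    case False
    define j where "j = (m + 1) div 2"
    have jm: "j < m" "m \<le> 2 * j" using False unfolding j_def by auto
    have R: "mat_poly (r ^ j) A \<in> carrier_mat n n" using A by auto
    have "mat_poly (r ^ (2 * j)) A = mat_poly (r ^ (2 * j - m) * r ^ m) A"
      using jm by (simp add: power_add[symmetric])
    also have "\<dots> = 0\<^sub>m n n" using less.prems mat_poly_mult[OF A] A by simp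
    finally have "mat_poly (r ^ j) A * mat_poly (r ^ j) A = 0\<^sub>m n n"
      by (simp add: mat_poly_mult[OF A, symmetric] power_add[symmetric] mult_2)
    moreover have "transpose_mat (mat_poly (r ^ j) A) = mat_poly (r ^ j) A"
      using mat_poly_transpose[OF A] sym by simp
    ultimately have "mat_poly (r ^ j) A = 0\<^sub>m n n" using sym_sq_zero[OF R] by blast
    then show ?thesis using less.hyps jm by blast
  qed
qed

lemma poly_vanish_zero:
  fixes A :: "real mat"
  assumes A: "A \<in> carrier_mat n n" and sym: "transpose_mat A = A"
    and cp: "char_poly A = (\<Prod>a\<leftarrow>ev. [:- a, 1:])"
    and rz: "\<And>x. x \<in> set ev \<Longrightarrow> poly r x = 0"
  shows "mat_poly r A = 0\<^sub>m n n"
proof -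
  obtain T P Q where sd: "schur_decomposition A ev = (T, P, Q)" by (cases "schur_decomposition A ev") auto
  from schur_decomposition[OF A cp sd] have sw: "similar_mat_wit A T P Q" and ut: "upper_triangular T"
    and dg: "diag_mat T = ev" by auto
  from sw A have T: "T \<in> carrier_mat n n" and P: "P \<in> carrier_mat n n" and Q: "Q \<in> carrier_mat n n"
    and PQ: "P * Q = 1\<^sub>m n" and QP: "Q * P = 1\<^sub>m n" and AT: "A = P * T * Q"
    unfolding similar_mat_wit_def Let_def by auto
  have "\<And>i. i < n \<Longrightarrow> T $$ (i, i) \<in> set ev"
    using dg T unfolding diag_mat_def by auto
  then have "\<And>i. i < n \<Longrightarrow> poly r (T $$ (i, i)) = 0" using rz by auto
  from nilp_poly[OF T ut this, of n] have "mat_poly (r ^ n) T = 0\<^sub>m n n"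
    using T by (auto intro!: eq_matI)
  then have "mat_poly (r ^ n) A = 0\<^sub>m n n"
    using mat_poly_similar[OF P Q T PQ QP, of "r ^ n"] AT P Q by simp
  then show ?thesis using descent[OF A sym] by blast
qed

lemma interp:
  fixes v :: "real \<Rightarrow> real"
  assumes "finite S"
  shows "\<exists>g. \<forall>s\<in>S. poly g s = v s"
  using assms
proof (induct S rule: finite_induct)
  case empty
  then show ?case by auto
next
  case (insert a S)
  then obtain g where g: "\<forall>s\<in>S. poly g s = v s" by blast
  define q where "q = (\<Prod>s\<in>S. [:- s, 1:])"
  have qa: "poly q a \<noteq> 0" using insert unfolding q_def by (auto simp: poly_prod)
  have qs: "\<And>s. s \<in> S \<Longrightarrow> poly q s = 0" using insert unfolding q_def by (auto simp: poly_prod)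
  define g' where "g' = g + smult ((v a - poly g a) / poly q a) q"
  have "\<forall>s\<in>insert a S. poly g' s = v s"
    using g qa qs unfolding g'_def by auto
  then show ?case by blast
qed

definition qf :: "nat \<Rightarrow> real mat \<Rightarrow> (nat \<Rightarrow> real) \<Rightarrow> real" where
  "qf n M x = (\<Sum>u<n. \<Sum>v<n. x u * M $$ (u, v) * x v)"

definition mvf :: "nat \<Rightarrow> real mat \<Rightarrow> (nat \<Rightarrow> real) \<Rightarrow> nat \<Rightarrow> real" where
  "mvf n M x u = (\<Sum>v<n. M $$ (u, v) * x v)"

lemma qf_mvf: "qf n M x = (\<Sum>u<n. x u * mvf n M x u)"
  unfolding qf_def mvf_def by (simp add: sum_distrib_left mult.assoc)

lemma qf_sq:
  assumes G: "G \<in> carrier_mat n n" and sym: "transpose_mat G = G"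
  shows "qf n (G * G) x = (\<Sum>l<n. (mvf n G x l)^2)"
proof -
  have symm: "\<And>a b. a < n \<Longrightarrow> b < n \<Longrightarrow> G $$ (a, b) = G $$ (b, a)"
    using sym G by (metis carrier_matD index_transpose_mat(1))
  have "qf n (G * G) x = (\<Sum>u<n. \<Sum>v<n. \<Sum>l<n. x u * G $$ (u, l) * G $$ (l, v) * x v)"
    unfolding qf_def using mult_entry[OF G G]
    by (intro sum.cong refl) (simp add: sum_distrib_left sum_distrib_right mult.assoc)
  also have "\<dots> = (\<Sum>u<n. \<Sum>l<n. \<Sum>v<n. x u * G $$ (u, l) * G $$ (l, v) * x v)"
    by (rule sum.cong[OF refl], rule sum.swap)
  also have "\<dots> = (\<Sum>l<n. \<Sum>u<n. \<Sum>v<n. x u * G $$ (u, l) * G $$ (l, v) * x v)"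
    by (rule sum.swap)
  also have "\<dots> = (\<Sum>l<n. (\<Sum>u<n. G $$ (l, u) * x u) * (\<Sum>v<n. G $$ (l, v) * x v))"
    using symm by (intro sum.cong refl) (simp add: sum_distrib_left sum_distrib_right mult_ac)
  finally show ?thesis by (simp add: mvf_def power2_eq_square)
qed

lemma qf_diag_shift:
  assumes "\<And>u v. u < n \<Longrightarrow> v < n \<Longrightarrow> B $$ (u, v) = F $$ (u, v) + (if u = v then c else 0)"
  shows "qf n B y = qf n F y + c * (\<Sum>u<n. (y u)^2)"
proof -
  have "qf n B y = (\<Sum>u<n. \<Sum>v<n. y u * F $$ (u, v) * y v + (if v = u then c * (y u)^2 else 0))"
    unfolding qf_def using assms by (intro sum.cong refl) (auto simp: algebra_simps power2_eq_square)
  also have "\<dots> = qf n F y + (\<Sum>u<n. c * (y u)^2)"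
    unfolding qf_def by (simp add: sum.distrib)
  finally show ?thesis by (simp add: sum_distrib_left)
qed

lemma psd_poly:
  fixes A :: "real mat"
  assumes A: "A \<in> carrier_mat n n" and sym: "transpose_mat A = A"
    and cp: "char_poly A = (\<Prod>a\<leftarrow>ev. [:- a, 1:])"
    and fnn: "\<And>x. x \<in> set ev \<Longrightarrow> poly f x \<ge> 0"
  shows "qf n (mat_poly f A) x \<ge> 0"
proof -
  obtain g where g: "\<forall>s\<in>set ev. poly g s = sqrt (poly f s)" using interp[of "set ev" "\<lambda>s. sqrt (poly f s)"] by auto
  have "mat_poly (f - g * g) A = 0\<^sub>m n n"
    by (rule poly_vanish_zero[OF A sym cp]) (use g fnn in auto)
  moreover have "mat_poly f A = mat_poly (f - g * g) A + mat_poly (g * g) A"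
    using mat_poly_add[OF A, of "f - g * g" "g * g"] by simp
  ultimately have "mat_poly f A = mat_poly g A * mat_poly g A"
    using mat_poly_mult[OF A] A by (simp add: mult_carrier_sq)
  moreover have "transpose_mat (mat_poly g A) = mat_poly g A" using mat_poly_transpose[OF A] sym by simp
  ultimately show ?thesis using qf_sq[of "mat_poly g A" n x] A by (simp add: sum_nonneg)
qed

lemma eig_poly:
  fixes A :: "real mat"
  assumes A: "A \<in> carrier_mat n n" and ev: "\<And>u. u < n \<Longrightarrow> mvf n A w u = lm * w u"
  shows "u < n \<Longrightarrow> mvf n (mat_poly f A) w u = poly f lm * w u"
proof (induct f arbitrary: u)
  case 0
  then show ?case using A by (simp add: mvf_def)
next
  case (pCons a f)
  have "mvf n (mat_poly (pCons a f) A) w u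
      = (\<Sum>v<n. (if u = v then a else 0) * w v + (\<Sum>l<n. A $$ (u, l) * mat_poly f A $$ (l, v) * w v))"
    unfolding mvf_def using mat_poly_pCons_entry[OF A pCons.prems] 
    by (intro sum.cong refl) (simp add: algebra_simps sum_distrib_right sum_distrib_left)
  also have "\<dots> = a * w u + (\<Sum>v<n. \<Sum>l<n. A $$ (u, l) * mat_poly f A $$ (l, v) * w v)"
    using pCons.prems by (simp add: sum.distrib if_distrib[of "\<lambda>z. z * _"] cong: if_cong)
  also have "(\<Sum>v<n. \<Sum>l<n. A $$ (u, l) * mat_poly f A $$ (l, v) * w v) = (\<Sum>l<n. A $$ (u, l) * mvf n (mat_poly f A) w l)"
    unfolding mvf_def by (subst sum.swap) (simp add: sum_distrib_left mult.assoc)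
  also have "\<dots> = (\<Sum>l<n. A $$ (u, l) * (poly f lm * w l))"
    using pCons.hyps(2) by (intro sum.cong refl) auto
  also have "\<dots> = poly f lm * mvf n A w u"
    unfolding mvf_def by (simp add: sum_distrib_left mult_ac)
  finally show ?case using ev[OF pCons.prems] by (simp add: algebra_simps)
qed

lemma spectral_bound:
  assumes B: "B \<in> carrier_mat n n" and sym: "transpose_mat B = B"
    and wn: "(\<Sum>u<n. (w u)^2) = 1"
    and bw: "\<And>u. u < n \<Longrightarrow> mvf n B w u = p1 * w u"
    and psd: "\<And>y. qf n B y \<ge> lam * (\<Sum>u<n. (y u)^2)"
  shows "qf n B x \<ge> lam * (\<Sum>u<n. (x u)^2) + (p1 - lam) * (\<Sum>u<n. w u * x u)^2"
proof -
  define t where "t = (\<Sum>u<n. w u * x u)"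
  define y where "y = (\<lambda>u. x u - t * w u)"
  have symm: "\<And>a b. a < n \<Longrightarrow> b < n \<Longrightarrow> B $$ (a, b) = B $$ (b, a)"
    using sym B by (metis carrier_matD index_transpose_mat(1))
  have my: "mvf n B y u = mvf n B x u - t * p1 * w u" if "u < n" for u
  proof -
    have "mvf n B y u = mvf n B x u - t * mvf n B w u"
      unfolding mvf_def y_def by (simp add: algebra_simps sum_subtractf sum_distrib_left)
    then show ?thesis using bw[OF that] by simp
  qed
  have wbx: "(\<Sum>u<n. w u * mvf n B x u) = p1 * t"
  proof -
    have "(\<Sum>u<n. w u * mvf n B x u) = (\<Sum>u<n. \<Sum>v<n. w u * B $$ (u, v) * x v)"
      unfolding mvf_def by (simp add: sum_distrib_left mult.assoc)
    also have "\<dots> = (\<Sum>v<n. \<Sum>u<n. w u * B $$ (u, v) * x v)" by (rule sum.swap)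
    also have "\<dots> = (\<Sum>v<n. x v * mvf n B w v)"
      unfolding mvf_def using symm by (intro sum.cong refl) (simp add: sum_distrib_left mult_ac)
    also have "\<dots> = (\<Sum>v<n. p1 * (w v * x v))" using bw by (intro sum.cong refl) auto
    finally show ?thesis unfolding t_def by (simp add: sum_distrib_left)
  qed
  have "qf n B y = (\<Sum>u<n. (x u - t * w u) * (mvf n B x u - t * p1 * w u))"
    unfolding qf_mvf using my by (intro sum.cong refl) (auto simp: y_def)
  also have "\<dots> = qf n B x - t * p1 * (\<Sum>u<n. x u * w u) - t * (\<Sum>u<n. w u * mvf n B x u) + t * t * p1 * (\<Sum>u<n. (w u)^2)"
    unfolding qf_mvf by (simp add: algebra_simps sum_subtractf sum.distrib sum_distrib_left power2_eq_square)
  also have "\<dots> = qf n B x - p1 * t^2"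
    using wbx wn unfolding t_def by (simp add: mult.commute power2_eq_square)
  finally have qy: "qf n B y = qf n B x - p1 * t^2" .
  have "(\<Sum>u<n. (y u)^2) = (\<Sum>u<n. (x u)^2) - 2 * t * (\<Sum>u<n. w u * x u) + t^2 * (\<Sum>u<n. (w u)^2)"
    unfolding y_def by (simp add: power2_diff sum_subtractf sum.distrib sum_distrib_left algebra_simps power_mult_distrib)
  also have "\<dots> = (\<Sum>u<n. (x u)^2) - t^2" using wn unfolding t_def by (simp add: power2_eq_square)
  finally have ny: "(\<Sum>u<n. (y u)^2) = (\<Sum>u<n. (x u)^2) - t^2" .
  from psd[of y] qy ny have "qf n B x - p1 * t^2 \<ge> lam * ((\<Sum>u<n. (x u)^2) - t^2)" by simp
  then show ?thesis unfolding t_def[symmetric] by (simp add: algebra_simps)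
qed

lemma adj_carrier: "adj_mat n E \<in> carrier_mat n n"
  by (simp add: adj_mat_def)

lemma adj_entry: "u < n \<Longrightarrow> v < n \<Longrightarrow> adj_mat n E $$ (u, v) = (if E u v then 1 else 0)"
  by (simp add: adj_mat_def)

lemma adj_sym: "simple_graph n E \<Longrightarrow> transpose_mat (adj_mat n E) = adj_mat n E"
  by (rule eq_matI) (auto simp: adj_mat_def simple_graph_def)

lemma dist_le_mono: "dist_le E k u v \<Longrightarrow> k \<le> k' \<Longrightarrow> dist_le E k' u v"
  unfolding dist_le_def by (meson order_trans)

lemma dist_le_refl: "dist_le E k u u"
  unfolding dist_le_def by (rule exI[of _ 0]) auto

lemma dist_le_step: "E u l \<Longrightarrow> dist_le E k l v \<Longrightarrow> dist_le E (Suc k) u v"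
  unfolding dist_le_def
proof -
  assume "E u l" "\<exists>m\<le>k. (l, v) \<in> {(x, y). E x y} ^^ m"
  then obtain m where "m \<le> k" "(l, v) \<in> {(x, y). E x y} ^^ m" by blast
  then have "(u, v) \<in> {(x, y). E x y} ^^ Suc m" using \<open>E u l\<close> by (intro relpow_Suc_I2) auto
  then show "\<exists>m\<le>Suc k. (u, v) \<in> {(x, y). E x y} ^^ m" using \<open>m \<le> k\<close> by (intro exI[of _ "Suc m"]) auto
qed

lemma support_poly:
  fixes f :: "real poly"
  shows "u < n \<Longrightarrow> v < n \<Longrightarrow> mat_poly f (adj_mat n E) $$ (u, v) \<noteq> 0 \<Longrightarrow> dist_le E (degree f) u v"
proof (induct f arbitrary: u v)
  case 0
  then show ?case using adj_carrier[of n E] by simp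
next
  case (pCons a f)
  note A = adj_carrier[of n E]
  show ?case
  proof (cases "u = v")
    case True then show ?thesis by (simp add: dist_le_refl)
  next
    case False
    with pCons.prems mat_poly_pCons_entry[OF A pCons.prems(1,2)]
    have "(\<Sum>l<n. adj_mat n E $$ (u, l) * mat_poly f (adj_mat n E) $$ (l, v)) \<noteq> 0" by simp
    then obtain l where l: "l < n" "adj_mat n E $$ (u, l) * mat_poly f (adj_mat n E) $$ (l, v) \<noteq> 0"
      by (meson lessThan_iff sum.neutral)
    then have El: "E u l" and F: "mat_poly f (adj_mat n E) $$ (l, v) \<noteq> 0"
      using adj_entry[OF pCons.prems(1) l(1), of E] by (auto split: if_splits)
    have "f \<noteq> 0" using F A l(1) pCons.prems(2) by auto
    then have "degree (pCons a f) = Suc (degree f)" by simp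
    then show ?thesis using dist_le_step[OF El pCons.hyps(2)[OF l(1) pCons.prems(2) F]] by simp
  qed
qed

lemma adjoint_entry:
  fixes X :: "complex mat"
  assumes "X \<in> carrier_mat d d" "i < d" "j < d"
  shows "mat_adjoint X $$ (i, j) = cnj (X $$ (j, i))"
  using assms by (simp add: mat_adjoint_def mat_of_rows_def)

lemma foldr_sum_entry:
  fixes f :: "nat \<Rightarrow> 'a::comm_ring_1 mat"
  assumes "\<And>h. h \<in> set xs \<Longrightarrow> f h \<in> carrier_mat d d"
  shows "foldr (\<lambda>h M. f h + M) xs (0\<^sub>m d d) \<in> carrier_mat d d \<and>
    (\<forall>i<d. \<forall>j<d. foldr (\<lambda>h M. f h + M) xs (0\<^sub>m d d) $$ (i, j) = sum_list (map (\<lambda>h. f h $$ (i, j)) xs))"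
  using assms by (induct xs) auto

lemma mat_sum_entry:
  fixes f :: "nat \<Rightarrow> 'a::comm_ring_1 mat"
  assumes "\<And>h. h \<in> {1..c} \<Longrightarrow> f h \<in> carrier_mat d d" "i < d" "j < d"
  shows "mat_sum d f c $$ (i, j) = (\<Sum>h\<in>{1..c}. f h $$ (i, j))"
proof -
  have s: "set [1..<c+1] = {1..c}" by auto
  have "mat_sum d f c $$ (i, j) = sum_list (map (\<lambda>h. f h $$ (i, j)) [1..<c+1])"
  proof -
    have "\<And>h. h \<in> set [1..<c+1] \<Longrightarrow> f h \<in> carrier_mat d d" using assms(1) unfolding s by blast
    from foldr_sum_entry[of "[1..<c+1]" f d, OF this] assms(2,3) show ?thesis unfolding mat_sum_def by blast
  qed
  also have "\<dots> = (\<Sum>h\<in>{1..c}. f h $$ (i, j))"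
    using sum_list_distinct_conv_sum_set[of "[1..<c+1]" "\<lambda>h. f h $$ (i, j)"] s by simp
  finally show ?thesis .
qed

lemma qf_pair:
  "(\<Sum>j\<in>D. qf n B (\<lambda>u. w u * \<alpha> j u) + qf n B (\<lambda>u. w u * \<beta> j u)) =
   (\<Sum>u<n. \<Sum>v<n. w u * B $$ (u, v) * w v * (\<Sum>j\<in>D. \<alpha> j u * \<alpha> j v + \<beta> j u * \<beta> j v))"
proof -
  have "(\<Sum>j\<in>D. qf n B (\<lambda>u. w u * \<alpha> j u) + qf n B (\<lambda>u. w u * \<beta> j u)) =
        (\<Sum>j\<in>D. \<Sum>u<n. \<Sum>v<n. w u * B $$ (u, v) * w v * (\<alpha> j u * \<alpha> j v + \<beta> j u * \<beta> j v))"
  proof (intro sum.cong refl)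
    fix j
    have e: "\<And>u v. w u * \<alpha> j u * B $$ (u, v) * (w v * \<alpha> j v) + w u * \<beta> j u * B $$ (u, v) * (w v * \<beta> j v)
       = w u * B $$ (u, v) * w v * (\<alpha> j u * \<alpha> j v + \<beta> j u * \<beta> j v)"
      by (simp add: algebra_simps)
    show "qf n B (\<lambda>u. w u * \<alpha> j u) + qf n B (\<lambda>u. w u * \<beta> j u) = (\<Sum>u<n. \<Sum>v<n. w u * B $$ (u, v) * w v * (\<alpha> j u * \<alpha> j v + \<beta> j u * \<beta> j v))"
      unfolding qf_def by (simp only: sum.distrib[symmetric] e)
  qed
  also have "\<dots> = (\<Sum>u<n. \<Sum>j\<in>D. \<Sum>v<n. w u * B $$ (u, v) * w v * (\<alpha> j u * \<alpha> j v + \<beta> j u * \<beta> j v))"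
    by (rule sum.swap)
  also have "\<dots> = (\<Sum>u<n. \<Sum>v<n. \<Sum>j\<in>D. w u * B $$ (u, v) * w v * (\<alpha> j u * \<alpha> j v + \<beta> j u * \<beta> j v))"
    by (rule sum.cong[OF refl], rule sum.swap)
  also have "\<dots> = (\<Sum>u<n. \<Sum>v<n. w u * B $$ (u, v) * w v * (\<Sum>j\<in>D. \<alpha> j u * \<alpha> j v + \<beta> j u * \<beta> j v))"
    by (simp only: sum_distrib_left)
  finally show ?thesis .
qed

lemma nsq_pair:
  fixes w :: "nat \<Rightarrow> real"
  shows
  "(\<Sum>j\<in>D. (\<Sum>u<n. (w u * \<alpha> j u)^2) + (\<Sum>u<n. (w u * \<beta> j u)^2)) =
   (\<Sum>u<n. (w u)^2 * (\<Sum>j\<in>D. \<alpha> j u * \<alpha> j u + \<beta> j u * \<beta> j u))"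
proof -
  have "(\<Sum>j\<in>D. (\<Sum>u<n. (w u * \<alpha> j u)^2) + (\<Sum>u<n. (w u * \<beta> j u)^2)) =
     (\<Sum>j\<in>D. \<Sum>u<n. (w u)^2 * (\<alpha> j u * \<alpha> j u + \<beta> j u * \<beta> j u))"
  proof (intro sum.cong refl)
    fix j
    have e: "\<And>u. (w u * \<alpha> j u)^2 + (w u * \<beta> j u)^2 = (w u)^2 * (\<alpha> j u * \<alpha> j u + \<beta> j u * \<beta> j u)"
      by (simp add: power2_eq_square algebra_simps)
    show "(\<Sum>u<n. (w u * \<alpha> j u)^2) + (\<Sum>u<n. (w u * \<beta> j u)^2) = (\<Sum>u<n. (w u)^2 * (\<alpha> j u * \<alpha> j u + \<beta> j u * \<beta> j u))"
      by (simp only: sum.distrib[symmetric] e)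
  qed
  also have "\<dots> = (\<Sum>u<n. \<Sum>j\<in>D. (w u)^2 * (\<alpha> j u * \<alpha> j u + \<beta> j u * \<beta> j u))"
    by (rule sum.swap)
  finally show ?thesis by (simp only: sum_distrib_left)
qed

lemma cauchy_card:
  fixes t :: "nat \<Rightarrow> real"
  assumes "finite H" "card H > 0" "(\<Sum>h\<in>H. t h) = 1"
  shows "(\<Sum>h\<in>H. (t h)^2) \<ge> 1 / card H"
proof -
  define m where "m = 1 / real (card H)"
  have e: "\<And>h. (t h - m)^2 = (t h)^2 - (2 * m) * t h + m^2" by (simp add: power2_diff)
  have "0 \<le> (\<Sum>h\<in>H. (t h - m)^2)" by (simp add: sum_nonneg)
  also have "\<dots> = (\<Sum>h\<in>H. (t h)^2) - (\<Sum>h\<in>H. (2 * m) * t h) + (\<Sum>h\<in>H. m^2)"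
    by (simp only: e sum.distrib sum_subtractf)
  also have "(\<Sum>h\<in>H. (2 * m) * t h) = 2 * m" using assms(3) by (simp only: sum_distrib_left[symmetric]) 
  also have "(\<Sum>h\<in>H. m^2) = real (card H) * m^2" by simp
  also have "real (card H) * m^2 = m" using assms(2) unfolding m_def by (simp add: power2_eq_square)
  finally show ?thesis unfolding m_def by simp
qed

lemma core:
  fixes B :: "real mat" and P :: "nat \<Rightarrow> nat \<Rightarrow> complex mat" and w :: "nat \<Rightarrow> real"
  assumes B: "B \<in> carrier_mat n n"
    and wn: "(\<Sum>u<n. (w u)^2) = 1"
    and spec: "\<And>x. qf n B x \<ge> lam * (\<Sum>u<n. (x u)^2) + (p1 - lam) * (\<Sum>u<n. w u * x u)^2"
    and lp: "lam \<le> p1"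
    and supp: "\<And>u v. u < n \<Longrightarrow> v < n \<Longrightarrow> u \<noteq> v \<Longrightarrow> B $$ (u, v) \<noteq> 0 \<Longrightarrow> dist_le E k u v"
    and Wb: "\<And>u. u < n \<Longrightarrow> B $$ (u, u) \<le> W"
    and col: "quantum_k_coloring n E k c d P" and d: "d > 0" and n: "n > 0"
  shows "c \<ge> 1 \<and> p1 - lam \<le> real c * (W - lam)"
proof -
  define H where "H = {1..c}"
  have proj: "P u h \<in> carrier_mat d d \<and> P u h * P u h = P u h \<and> mat_adjoint (P u h) = P u h"
    if "u < n" "h \<in> H" for u h
    using col that unfolding quantum_k_coloring_def orth_projector_def H_def by auto
  have orth: "P u h * P v h = 0\<^sub>m d d" if "u < n" "v < n" "u \<noteq> v" "dist_le E k u v" "h \<in> H" for u v h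
    using col that unfolding quantum_k_coloring_def H_def by auto
  have sum1: "(\<Sum>h\<in>H. P u h $$ (0, 0)) = 1" if "u < n" for u
  proof -
    have "mat_sum d (P u) c = 1\<^sub>m d" using col that unfolding quantum_k_coloring_def by auto
    then have "mat_sum d (P u) c $$ (0, 0) = 1" using d by simp
    then show ?thesis using mat_sum_entry[of c "P u" d 0 0] proj[OF that] d unfolding H_def by auto
  qed
  define \<rho> where "\<rho> u h = Re (P u h $$ (0, 0))" for u h
  have rsum: "(\<Sum>h\<in>H. \<rho> u h) = 1" if "u < n" for u
    using arg_cong[OF sum1[OF that], of Re] unfolding \<rho>_def by (simp add: Re_sum)
  have c1: "c \<ge> 1"
  proof (rule ccontr)
    assume "\<not> c \<ge> 1"
    then have "H = {}" unfolding H_def by auto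
    then show False using rsum[OF n] by simp
  qed
  define \<alpha> where "\<alpha> h j u = Re (P u h $$ (j, 0))" for h j u
  define \<beta> where "\<beta> h j u = Im (P u h $$ (j, 0))" for h j u
  define G where "G h u v = Re ((P u h * P v h) $$ (0, 0))" for h u v
  have C1: "(\<Sum>j<d. \<alpha> h j u * \<alpha> h j v + \<beta> h j u * \<beta> h j v) = G h u v"
    if "u < n" "v < n" "h \<in> H" for u v h
  proof -
    have Pu: "P u h \<in> carrier_mat d d" and Pv: "P v h \<in> carrier_mat d d" using proj that by auto
    have adj: "P u h $$ (0, j) = cnj (P u h $$ (j, 0))" if "j < d" for j
      using adjoint_entry[OF Pu d that] proj[OF \<open>u < n\<close> \<open>h \<in> H\<close>] by simp
    have "(P u h * P v h) $$ (0, 0) = (\<Sum>j<d. cnj (P u h $$ (j, 0)) * P v h $$ (j, 0))"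
      using mult_entry[OF Pu Pv d d] adj by simp
    then have "G h u v = (\<Sum>j<d. Re (cnj (P u h $$ (j, 0)) * P v h $$ (j, 0)))"
      unfolding G_def by (simp add: Re_sum)
    then show ?thesis unfolding \<alpha>_def \<beta>_def by simp
  qed
  have C3: "G h u u = \<rho> u h" if "u < n" "h \<in> H" for u h
    using proj[OF that] unfolding G_def \<rho>_def by simp
  have C4: "B $$ (u, v) * G h u v = 0" if "u < n" "v < n" "u \<noteq> v" "h \<in> H" for u v h
  proof (cases "B $$ (u, v) = 0")
    case False
    then have "P u h * P v h = 0\<^sub>m d d" using orth supp that by blast
    then show ?thesis unfolding G_def using d by simp
  qed simp
  define a where "a h j = (\<lambda>u. w u * \<alpha> h j u)" for h j
  define b where "b h j = (\<lambda>u. w u * \<beta> h j u)" for h j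
  define \<tau> where "\<tau> h = (\<Sum>u<n. (w u)^2 * \<rho> u h)" for h
  have Qh: "(\<Sum>j<d. qf n B (a h j) + qf n B (b h j)) = (\<Sum>u<n. (w u)^2 * B $$ (u, u) * \<rho> u h)"
    if h: "h \<in> H" for h
  proof -
    have "(\<Sum>j<d. qf n B (a h j) + qf n B (b h j)) =
      (\<Sum>u<n. \<Sum>v<n. w u * B $$ (u, v) * w v * (\<Sum>j<d. \<alpha> h j u * \<alpha> h j v + \<beta> h j u * \<beta> h j v))"
      unfolding a_def b_def by (rule qf_pair)
    also have "\<dots> = (\<Sum>u<n. \<Sum>v<n. w u * w v * (B $$ (u, v) * G h u v))"
      using C1 h by (intro sum.cong refl) (simp add: mult_ac)
    also have "\<dots> = (\<Sum>u<n. w u * w u * (B $$ (u, u) * G h u u))"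
    proof (rule sum.cong[OF refl])
      fix u assume u: "u \<in> {..<n}"
      show "(\<Sum>v<n. w u * w v * (B $$ (u, v) * G h u v)) = w u * w u * (B $$ (u, u) * G h u u)"
        by (rule sum_single) (use u C4 h in auto)
    qed
    also have "\<dots> = (\<Sum>u<n. (w u)^2 * B $$ (u, u) * \<rho> u h)"
      using C3 h by (intro sum.cong refl) (simp add: power2_eq_square mult_ac)
    finally show ?thesis .
  qed
  have Nh: "(\<Sum>j<d. (\<Sum>u<n. (a h j u)^2) + (\<Sum>u<n. (b h j u)^2)) = (\<Sum>u<n. (w u)^2 * \<rho> u h)"
    if h: "h \<in> H" for h
  proof -
    have "(\<Sum>j<d. (\<Sum>u<n. (a h j u)^2) + (\<Sum>u<n. (b h j u)^2)) =
       (\<Sum>u<n. (w u)^2 * (\<Sum>j<d. \<alpha> h j u * \<alpha> h j u + \<beta> h j u * \<beta> h j u))"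
      unfolding a_def b_def by (rule nsq_pair)
    also have "\<dots> = (\<Sum>u<n. (w u)^2 * \<rho> u h)"
      using C1 C3 h by (intro sum.cong refl) simp
    finally show ?thesis .
  qed
  have Dh: "(\<Sum>u<n. w u * a h 0 u) = \<tau> h" for h
    unfolding a_def \<tau>_def \<alpha>_def \<rho>_def by (intro sum.cong refl) (simp add: power2_eq_square mult_ac)
  have low: "(\<Sum>u<n. (w u)^2 * B $$ (u, u) * \<rho> u h) \<ge> lam * (\<Sum>u<n. (w u)^2 * \<rho> u h) + (p1 - lam) * (\<tau> h)^2"
    if h: "h \<in> H" for h
  proof -
    define X where "X j = (\<Sum>u<n. w u * a h j u)^2 + (\<Sum>u<n. w u * b h j u)^2" for j
    have "(\<Sum>j<d. lam * ((\<Sum>u<n. (a h j u)^2) + (\<Sum>u<n. (b h j u)^2)) + (p1 - lam) * X j)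
        \<le> (\<Sum>j<d. qf n B (a h j) + qf n B (b h j))"
    proof (rule sum_mono)
      fix j
      have s1: "qf n B (a h j) \<ge> lam * (\<Sum>u<n. (a h j u)^2) + (p1 - lam) * (\<Sum>u<n. w u * a h j u)^2" by (rule spec)
      have s2: "qf n B (b h j) \<ge> lam * (\<Sum>u<n. (b h j u)^2) + (p1 - lam) * (\<Sum>u<n. w u * b h j u)^2" by (rule spec)
      show "lam * ((\<Sum>u<n. (a h j u)^2) + (\<Sum>u<n. (b h j u)^2)) + (p1 - lam) * X j \<le> qf n B (a h j) + qf n B (b h j)"
        using s1 s2 unfolding X_def by (simp add: distrib_left)
    qed
    moreover have "(\<Sum>j<d. lam * ((\<Sum>u<n. (a h j u)^2) + (\<Sum>u<n. (b h j u)^2)) + (p1 - lam) * X j)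
        = lam * (\<Sum>u<n. (w u)^2 * \<rho> u h) + (p1 - lam) * (\<Sum>j<d. X j)"
      using Nh[OF h] by (simp only: sum.distrib sum_distrib_left[symmetric])
    moreover have "(\<Sum>j<d. X j) \<ge> X 0"
      by (rule member_le_sum) (use d in \<open>auto simp: X_def\<close>)
    moreover have "X 0 \<ge> (\<tau> h)^2" using Dh unfolding X_def by simp
    ultimately show ?thesis using Qh[OF h] lp
      by (smt (verit, ccfv_SIG) mult_left_mono)
  qed
  have fin: "finite H" unfolding H_def by simp
  have cardH: "card H = c" unfolding H_def by simp
  have sum_swap_rho: "(\<Sum>h\<in>H. \<Sum>u<n. f u * \<rho> u h) = (\<Sum>u<n. f u)" for f
  proof -
    have "(\<Sum>h\<in>H. \<Sum>u<n. f u * \<rho> u h) = (\<Sum>u<n. \<Sum>h\<in>H. f u * \<rho> u h)" by (rule sum.swap)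
    also have "\<dots> = (\<Sum>u<n. f u * (\<Sum>h\<in>H. \<rho> u h))" by (simp add: sum_distrib_left)
    also have "\<dots> = (\<Sum>u<n. f u)" using rsum by simp
    finally show ?thesis .
  qed
  have "(\<Sum>h\<in>H. \<Sum>u<n. (w u)^2 * B $$ (u, u) * \<rho> u h) \<ge>
        (\<Sum>h\<in>H. lam * (\<Sum>u<n. (w u)^2 * \<rho> u h) + (p1 - lam) * (\<tau> h)^2)"
    using low by (rule sum_mono)
  moreover have "(\<Sum>h\<in>H. \<Sum>u<n. (w u)^2 * B $$ (u, u) * \<rho> u h) = (\<Sum>u<n. (w u)^2 * B $$ (u, u))"
    using sum_swap_rho[of "\<lambda>u. (w u)^2 * B $$ (u, u)"] .
  moreover have "(\<Sum>u<n. (w u)^2 * B $$ (u, u)) \<le> (\<Sum>u<n. (w u)^2 * W)"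
    using Wb by (intro sum_mono mult_left_mono) auto
  moreover have "(\<Sum>u<n. (w u)^2 * W) = W" using wn by (simp add: sum_distrib_right[symmetric])
  moreover have "(\<Sum>h\<in>H. lam * (\<Sum>u<n. (w u)^2 * \<rho> u h) + (p1 - lam) * (\<tau> h)^2)
      = lam + (p1 - lam) * (\<Sum>h\<in>H. (\<tau> h)^2)"
    using sum_swap_rho[of "\<lambda>u. (w u)^2"] wn by (simp add: sum.distrib sum_distrib_left[symmetric])
  moreover have "(\<Sum>h\<in>H. \<tau> h) = 1" using sum_swap_rho[of "\<lambda>u. (w u)^2"] wn unfolding \<tau>_def by simp
  then have "(\<Sum>h\<in>H. (\<tau> h)^2) \<ge> 1 / c" using cauchy_card[OF fin] cardH c1 by auto
  ultimately have "W \<ge> lam + (p1 - lam) * (1 / c)"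
    by (smt (verit) lp mult_left_mono)
  then have "W - lam \<ge> (p1 - lam) / c" by simp
  then have "real c * (W - lam) \<ge> p1 - lam" using c1 by (simp add: field_simps)
  then show ?thesis using c1 by simp
qed

lemma poly_prod_lin: fixes x :: real shows "poly (\<Prod>a\<leftarrow>ev. [:- a, 1:]) x = (\<Prod>a\<leftarrow>ev. x - a)"
  by (induct ev) (auto simp: algebra_simps)

lemma proj_one: "orth_projector 1 (1\<^sub>m 1)"
  unfolding orth_projector_def by (auto intro!: eq_matI simp: adjoint_entry mat_adjoint_def mat_of_rows_def)

lemma proj_zero: "orth_projector 1 (0\<^sub>m 1 1)"
  unfolding orth_projector_def by (auto intro!: eq_matI simp: adjoint_entry mat_adjoint_def mat_of_rows_def)

lemma classical_coloring:
  assumes "n > 0"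
  shows "\<exists>d>0. \<exists>P. quantum_k_coloring n E k n d P"
proof -
  define Pc :: "nat \<Rightarrow> nat \<Rightarrow> complex mat" where "Pc v h = (if h = v + 1 then 1\<^sub>m 1 else 0\<^sub>m 1 1)" for v h
  have car: "Pc v h \<in> carrier_mat 1 1" for v h unfolding Pc_def by auto
  have ms: "mat_sum 1 (Pc v) n = 1\<^sub>m 1" if "v < n" for v
  proof -
    have s: "set [1..<n+1] = {1..n}" by auto
    have fe: "foldr (\<lambda>h M. Pc v h + M) [1..<n+1] (0\<^sub>m 1 1) \<in> carrier_mat 1 1"
      using foldr_sum_entry[of "[1..<n+1]" "Pc v" 1] car by blast
    have "mat_sum 1 (Pc v) n $$ (0, 0) = (\<Sum>h\<in>{1..n}. Pc v h $$ (0, 0))"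
      using mat_sum_entry[of n "Pc v" 1 0 0] car by auto
    also have "\<dots> = (\<Sum>h\<in>{1..n}. if h = v + 1 then 1 else 0)"
      unfolding Pc_def by (intro sum.cong refl) auto
    also have "\<dots> = 1" using that by (simp add: sum.delta)
    finally show ?thesis using fe unfolding mat_sum_def[symmetric]
      by (intro eq_matI) auto
  qed
  have "quantum_k_coloring n E k n 1 Pc"
    unfolding quantum_k_coloring_def
  proof (intro conjI allI impI ballI)
    fix v h assume "v < n" "h \<in> {1..n}"
    show "orth_projector 1 (Pc v h)" unfolding Pc_def using proj_one proj_zero by auto
  next
    fix v assume "v < n" then show "mat_sum 1 (Pc v) n = 1\<^sub>m 1" by (rule ms)
  next
    fix v w h assume "v < n" "w < n" "v \<noteq> w" "dist_le E k v w" "h \<in> {1..n}"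
    then show "Pc v h * Pc w h = 0\<^sub>m 1 1" unfolding Pc_def by (auto intro!: eq_matI)
  qed
  then show ?thesis by blast
qed

theorem theorem5p2:
  fixes n k :: nat and E :: "nat \<Rightarrow> nat \<Rightarrow> bool" and p :: "real poly"
    and ev :: "real list"
  assumes G: "simple_graph n E"
    and n2: "n \<ge> 2"
    and ev_len: "length ev = n"
    and ev_sorted: "sorted_wrt (\<ge>) ev"
    and ev_char: "char_poly (adj_mat n E) = (\<Prod>a\<leftarrow>ev. [:- a, 1:])"
    and k1: "k \<ge> 1"
    and pdeg: "degree p \<le> k"
    and pgap: "\<forall>i\<in>{1..<n}. poly p (ev ! 0) > poly p (ev ! i)"
  shows "real (chi_kq n E k) \<ge>
    (let W = Max ((\<lambda>u. mat_poly p (adj_mat n E) $$ (u, u)) ` {0..<n});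
         lam = Min ((\<lambda>i. poly p (ev ! i)) ` {1..<n})
     in (poly p (ev ! 0) - lam) / (W - lam))"
proof -
  define A where "A = adj_mat n E"
  define B where "B = mat_poly p A"
  define W where "W = Max ((\<lambda>u. B $$ (u, u)) ` {0..<n})"
  define lam where "lam = Min ((\<lambda>i. poly p (ev ! i)) ` {1..<n})"
  define p1 where "p1 = poly p (ev ! 0)"
  have A: "A \<in> carrier_mat n n" unfolding A_def by (rule adj_carrier)
  have Asym: "transpose_mat A = A" unfolding A_def using G by (rule adj_sym)
  have cp: "char_poly A = (\<Prod>a\<leftarrow>ev. [:- a, 1:])" unfolding A_def by (rule ev_char)
  have B: "B \<in> carrier_mat n n" unfolding B_def using A by simp
  have Bsym: "transpose_mat B = B" unfolding B_def using mat_poly_transpose[OF A] Asym by simp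
  have lam_le: "lam \<le> poly p (ev ! i)" if "i \<in> {1..<n}" for i
    unfolding lam_def using that by (intro Min_le) auto
  have lam_p1: "lam < p1"
  proof -
    have 1: "(1::nat) \<in> {1..<n}" using n2 by auto
    have "poly p (ev ! 1) < poly p (ev ! 0)" using pgap 1 by blast
    then show ?thesis using lam_le[OF 1] unfolding p1_def by linarith
  qed
  have nn: "poly (p - [:lam:]) x \<ge> 0" if "x \<in> set ev" for x
  proof -
    have "\<exists>i<length ev. ev ! i = x" using that by (simp add: in_set_conv_nth)
    then obtain i where i: "i < n" "x = ev ! i" using ev_len by auto
    show ?thesis
    proof (cases "i = 0")
      case True then show ?thesis using i lam_p1 unfolding p1_def by simp
    next
      case False then show ?thesis using i lam_le[of i] by simp
    qed
  qed
  have psdF: "qf n (mat_poly (p - [:lam:]) A) y \<ge> 0" for y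
    by (rule psd_poly[OF A Asym cp nn])
  have Bent: "B $$ (u, v) = mat_poly (p - [:lam:]) A $$ (u, v) + (if u = v then lam else 0)"
    if "u < n" "v < n" for u v
  proof -
    have "B = mat_poly (p - [:lam:]) A + mat_poly [:lam:] A"
      unfolding B_def using mat_poly_add[OF A, of "p - [:lam:]" "[:lam:]"] by simp
    then show ?thesis using that A mat_poly_const[OF A, of lam] by simp
  qed
  have psdB: "qf n B y \<ge> lam * (\<Sum>u<n. (y u)^2)" for y
    using qf_diag_shift[of n B "mat_poly (p - [:lam:]) A" lam y, OF Bent] psdF[of y] by simp
  have "poly (char_poly A) (ev ! 0) = 0"
    using cp n2 ev_len by (simp add: poly_prod_lin prod_list_zero_iff)
  then have "eigenvalue A (ev ! 0)" using eigenvalue_root_char_poly[OF A] by simp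
  then obtain v where v: "v \<in> carrier_vec n" "v \<noteq> 0\<^sub>v n" "A *\<^sub>v v = ev ! 0 \<cdot>\<^sub>v v"
    unfolding eigenvalue_def eigenvector_def using A by auto
  define wv where "wv u = v $ u" for u
  have Awv: "mvf n A wv u = ev ! 0 * wv u" if "u < n" for u
  proof -
    have "(A *\<^sub>v v) $ u = ev ! 0 * wv u" using v that unfolding wv_def by simp
    moreover have "(A *\<^sub>v v) $ u = mvf n A wv u"
      using that A v(1) unfolding mvf_def wv_def by (auto simp: scalar_prod_def atLeast0LessThan intro!: sum.cong)
    ultimately show ?thesis by simp
  qed
  define s where "s = (\<Sum>u<n. (wv u)^2)"
  have s_pos: "s > 0"
  proof -
    obtain u where "u < n" "v $ u \<noteq> 0" using v by (metis eq_vecI carrier_vecD index_zero_vec)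
    then have "(wv u)^2 > 0" unfolding wv_def by simp
    moreover have "s \<ge> (wv u)^2" unfolding s_def by (rule member_le_sum) (use \<open>u < n\<close> in auto)
    ultimately show ?thesis by linarith
  qed
  define w where "w u = wv u / sqrt s" for u
  have wn: "(\<Sum>u<n. (w u)^2) = 1"
    using s_pos unfolding w_def by (simp add: power_divide sum_divide_distrib[symmetric] s_def[symmetric])
  have Aw: "mvf n A w u = ev ! 0 * w u" if "u < n" for u
  proof -
    have "mvf n A w u = mvf n A wv u / sqrt s" unfolding mvf_def w_def by (simp add: sum_divide_distrib)
    then show ?thesis using Awv[OF that] unfolding w_def by simp
  qed
  have Bw: "mvf n B w u = p1 * w u" if "u < n" for u
    unfolding B_def p1_def using eig_poly[OF A Aw that] .
  have spec: "qf n B x \<ge> lam * (\<Sum>u<n. (x u)^2) + (p1 - lam) * (\<Sum>u<n. w u * x u)^2" for x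
    by (rule spectral_bound[OF B Bsym wn Bw psdB])
  have supp: "dist_le E k u v" if "u < n" "v < n" "u \<noteq> v" "B $$ (u, v) \<noteq> 0" for u v
    using support_poly[of u n v p E] that pdeg dist_le_mono unfolding B_def A_def by blast
  have Wb: "B $$ (u, u) \<le> W" if "u < n" for u
    unfolding W_def using that by (intro Max_ge) auto
  have ex: "\<exists>c d. d > 0 \<and> (\<exists>P. quantum_k_coloring n E k c d P)"
    using classical_coloring[of n E k] n2 by auto
  define chi where "chi = chi_kq n E k"
  have "\<exists>d>0. \<exists>P. quantum_k_coloring n E k chi d P"
    unfolding chi_def chi_kq_def by (rule LeastI_ex) (use ex in blast)
  then obtain d P where d: "d > 0" and col: "quantum_k_coloring n E k chi d P" by blast
  have main: "chi \<ge> 1 \<and> p1 - lam \<le> real chi * (W - lam)"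
    by (rule core[OF B wn spec _ supp Wb col d]) (use lam_p1 n2 in auto)
  have goal: "(p1 - lam) / (W - lam) \<le> real chi"
  proof (cases "W - lam > 0")
    case True then show ?thesis using main by (simp add: divide_le_eq)
  next
    case False
    then have "(p1 - lam) / (W - lam) \<le> 0" using lam_p1 by (simp add: divide_nonneg_nonpos)
    then show ?thesis by simp
  qed
  then show ?thesis unfolding chi_def W_def lam_def p1_def B_def A_def Let_def .
qed

end
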